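(* Let $S$ be a numerical semigroup. For every $s\in S$ with $\mathfrak d(s)\ge2$ there exists $d\in\mathcal E(S)$ with $d\le_S s$.
   Context: A numerical semigroup $S$ is a submonoid of $(\mathbb N,+)$ with finite complement, with minimal generating set $A=\{n_1,\dots,n_e\}$. The cyclotomic exponent sequence is the unique integer sequence $(e_j)_{j\ge1}$ with $(1-x)\sum_{s\in S}x^s=\prod_{j\ge1}(1-x^j)^{e_j}$ in $\mathbb Z[[x]]$; $\mathcal E(S)=\{d\in\mathbb N: d\ge2,\ e_d\ne0,\ d\notin A\}$. Write $a\le_S b$ if $b-a\in S$. With $\varphi:\mathbb N^e\to S$, $\varphi(a)=\sum_ia_in_i$, $\mathfrak d(s)=|\varphi^{-1}(s)|$ is the number of factorizations of $s$. *)

theory Defs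
  imports "HOL-Computational_Algebra.Formal_Power_Series"
begin

definition numerical_semigroup :: "nat set \<Rightarrow> bool" where
  "numerical_semigroup S \<longleftrightarrow> 0 \<in> S \<and> (\<forall>a\<in>S. \<forall>b\<in>S. a + b \<in> S) \<and> finite (UNIV - S)"

definition min_gens :: "nat set \<Rightarrow> nat set" where
  "min_gens S = {n \<in> S. n \<noteq> 0 \<and> \<not> (\<exists>a\<in>S. \<exists>b\<in>S. a \<noteq> 0 \<and> b \<noteq> 0 \<and> n = a + b)}"

definition sg_series :: "nat set \<Rightarrow> rat fps" where
  "sg_series S = Abs_fps (\<lambda>n. if n \<in> S then 1 else 0)"

definition is_cyc_exp_seq :: "nat set \<Rightarrow> (nat \<Rightarrow> int) \<Rightarrow> bool" where
  "is_cyc_exp_seq S e \<longleftrightarrow>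
     (\<lambda>n. \<Prod>j\<in>{1..n}. (1 - fps_X ^ j) powi (e j)) \<longlonglongrightarrow> (1 - fps_X) * sg_series S"

definition cyc_exp :: "nat set \<Rightarrow> nat \<Rightarrow> int" where
  "cyc_exp S = (THE e. is_cyc_exp_seq S e \<and> e 0 = 0)"

definition cycE :: "nat set \<Rightarrow> nat set" where
  "cycE S = {d. d \<ge> 2 \<and> cyc_exp S d \<noteq> 0 \<and> d \<notin> min_gens S}"

definition factorizations :: "nat set \<Rightarrow> nat \<Rightarrow> (nat \<Rightarrow> nat) set" where
  "factorizations S s = {f. (\<forall>a. a \<notin> min_gens S \<longrightarrow> f a = 0) \<and> (\<Sum>a\<in>min_gens S. f a * a) = s}"

definition nfact :: "nat set \<Rightarrow> nat \<Rightarrow> nat" where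
  "nfact S s = card (factorizations S s)"

definition sg_le :: "nat set \<Rightarrow> nat \<Rightarrow> nat \<Rightarrow> bool" where
  "sg_le S a b \<longleftrightarrow> a \<le> b \<and> b - a \<in> S"

end

theory Submission
  imports Defs
begin

unbundle fps_syntax


type_synonym rfps = "rat fps"

definition nearly1 :: "nat \<Rightarrow> int \<Rightarrow> rfps \<Rightarrow> bool" where
  "nearly1 k c f \<longleftrightarrow> f $ 0 = 1 \<and> (\<forall>i. 0 < i \<and> i < k \<longrightarrow> f $ i = 0) \<and> f $ k = - of_int c"

lemma near_mult_nth:
  assumes k: "k \<ge> 1" and n: "nearly1 k c f" and i: "i \<le> k"
  shows "(g * f)  $  i = g $ i + (if i = k then g $ 0 * f $ k else 0)"
proof -
  have "(g * f)  $  i = (\<Sum>j=0..i. g $ j * f $ (i-j))" by (rule fps_mult_nth)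
  also have "\<dots> = (\<Sum>j=0..i. (if j = i then g $ i else 0) + (if j = 0 \<and> i = k then g $ 0 * f $ k else 0))"
  proof (rule sum.cong)
    fix j assume j: "j \<in> {0..i}"
    show "g $ j * f $ (i-j) = (if j = i then g $ i else 0) + (if j = 0 \<and> i = k then g $ 0 * f $ k else 0)"
    proof (cases "j = i")
      case True then show ?thesis using n k unfolding nearly1_def by auto
    next
      case False
      show ?thesis
      proof (cases "i - j < k")
        case True
        then have "f $ (i-j) = 0" using n False j unfolding nearly1_def by auto
        then show ?thesis using False True by auto
      next
        case False2: False
        then have "j = 0" "i = k" using j i by auto
        then show ?thesis using False by auto
      qed
    qed
  qed simp
  also have "\<dots> = g $ i + (if i = k then g $ 0 * f $ k else 0)"
    by (simp add: sum.distrib)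
  finally show ?thesis .
qed

lemma near_mult_lt:
  assumes "k \<ge> 1" "nearly1 k c f" "i < k" shows "(g * f)  $  i = g $ i"
  using near_mult_nth[OF assms(1,2), of i g] assms(3) by simp

lemma near_mult_eq:
  assumes "k \<ge> 1" "nearly1 k c f" shows "(g * f)  $  k = g $ k - of_int c * g $ 0"
  using near_mult_nth[OF assms(1,2), of k g] assms(2) unfolding nearly1_def by simp

lemma near_mult:
  assumes k: "k \<ge> 1" and f: "nearly1 k c f" and g: "nearly1 k d g"
  shows "nearly1 k (c + d) (f * g)"
  using near_mult_lt[OF k g, of _ f] near_mult_eq[OF k g, of f] f g
  unfolding nearly1_def by (auto simp: algebra_simps)

lemma near_one: "k \<ge> 1 \<Longrightarrow> nearly1 k 0 1"
  unfolding nearly1_def by auto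

lemma near_power:
  assumes k: "k \<ge> 1" and f: "nearly1 k c f" shows "nearly1 k (int n * c) (f ^ n)"
proof (induction n)
  case 0 then show ?case using near_one k by simp
next
  case (Suc n)
  have "nearly1 k (c + int n * c) (f * f ^ n)" by (rule near_mult[OF k f Suc])
  then show ?case by (simp add: algebra_simps)
qed

lemma near_inverse:
  assumes k: "k \<ge> 1" and f: "nearly1 k c f" shows "nearly1 k (- c) (inverse f)"
proof -
  have f0: "f $ 0 = 1" using f unfolding nearly1_def by simp
  have hf: "inverse f * f = 1" using f0 by (intro inverse_mult_eq_1) simp
  have h0: "inverse f  $  0 = 1" using f0 by simp
  have "\<forall>i. 0 < i \<and> i < k \<longrightarrow> inverse f  $  i = 0"
  proof safe
    fix i :: nat assume "0 < i" "i < k"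
    then have "(inverse f * f)  $  i = inverse f  $  i" using near_mult_lt[OF k f] by blast
    then show "inverse f  $  i = 0" using hf \<open>0 < i\<close> by simp
  qed
  moreover have "inverse f  $  k = of_int c"
    using near_mult_eq[OF k f, of "inverse f"] hf h0 k by simp
  ultimately show ?thesis using h0 unfolding nearly1_def by simp
qed

lemma near_base: assumes "k \<ge> 1" shows "nearly1 k 1 (1 - fps_X ^ k)"
  using assms unfolding nearly1_def by auto

definition fac :: "nat \<Rightarrow> int \<Rightarrow> rfps" where
  "fac j c = (1 - fps_X ^ j) powi c"

lemma near_fac: assumes "k \<ge> 1" shows "nearly1 k c (fac k c)"
proof (cases "c \<ge> 0")
  case True
  then show ?thesis using near_power[OF assms near_base[OF assms], of "nat c"]
    by (simp add: fac_def power_int_def)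
next
  case False
  have "nearly1 k (int (nat (-c)) * (-1)) (inverse (1 - fps_X ^ k) ^ nat (-c))"
    by (rule near_power[OF assms near_inverse[OF assms near_base[OF assms]]])
  then show ?thesis using False by (simp add: fac_def power_int_def)
qed

definition prodk :: "(nat \<Rightarrow> int) \<Rightarrow> nat \<Rightarrow> rfps" where
  "prodk e n = (\<Prod>j\<in>{1..n}. fac j (e j))"

lemma prodk_0[simp]: "prodk e 0 = 1" by (simp add: prodk_def)

lemma prodk_Suc: "prodk e (Suc n) = prodk e n * fac (Suc n) (e (Suc n))"
  unfolding prodk_def by (simp add: atLeastAtMostSuc_conv mult.commute)

lemma prodk_cong: "(\<And>j. 1 \<le> j \<Longrightarrow> j \<le> n \<Longrightarrow> e j = e' j) \<Longrightarrow> prodk e n = prodk e' n"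
  unfolding prodk_def by (rule prod.cong) auto

lemma fac_0: "j \<ge> 1 \<Longrightarrow> fac j c $ 0 = 1"
  using near_fac[of j c] unfolding nearly1_def by simp

lemma prodk_nth0[simp]: "prodk e n $ 0 = 1"
  by (induction n) (simp_all add: prodk_Suc fac_0)

lemma prodk_stab1: "i \<le> n \<Longrightarrow> prodk e (Suc n) $ i = prodk e n $ i"
  unfolding prodk_Suc by (rule near_mult_lt[OF _ near_fac]) auto

lemma prodk_stab: "i \<le> n \<Longrightarrow> n \<le> m \<Longrightarrow> prodk e m $ i = prodk e n $ i"
proof (induction m)
  case 0 then show ?case by simp
next
  case (Suc m)
  then show ?case
    by (cases "n = Suc m") (auto simp: prodk_stab1)
qed

lemma prodk_rec: "prodk e (Suc n) $ Suc n = prodk e n $ Suc n - of_int (e (Suc n))"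
proof -
  have "nearly1 (Suc n) (e (Suc n)) (fac (Suc n) (e (Suc n)))" by (rule near_fac) simp
  from near_mult_eq[OF _ this, of "prodk e n"] show ?thesis unfolding prodk_Suc by simp
qed

lemma cyc_iff:
  "(\<lambda>n. prodk e n) \<longlonglongrightarrow> P \<longleftrightarrow> (\<forall>k. prodk e k $ k = P $ k)"
proof
  assume "(\<lambda>n. prodk e n) \<longlonglongrightarrow> P"
  then have "\<forall>k. eventually (\<lambda>n. prodk e n $ k = P $ k) sequentially"
    unfolding tendsto_fps_iff by blast
  show "\<forall>k. prodk e k $ k = P $ k"
  proof
    fix k
    from \<open>\<forall>k. _\<close> obtain N where N: "\<And>n. n \<ge> N \<Longrightarrow> prodk e n $ k = P $ k"
      unfolding eventually_sequentially by blast
    have "prodk e k $ k = prodk e (max k N) $ k" by (rule prodk_stab[symmetric]) auto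
    also have "\<dots> = P $ k" by (rule N) auto
    finally show "prodk e k $ k = P $ k" .
  qed
next
  assume h: "\<forall>k. prodk e k $ k = P $ k"
  show "(\<lambda>n. prodk e n) \<longlonglongrightarrow> P"
    unfolding tendsto_fps_iff eventually_sequentially
  proof (intro allI)
    fix k :: nat
    show "\<exists>N. \<forall>n\<ge>N. prodk e n $ k = P $ k"
    proof (intro exI[of _ k] allI impI)
      fix n :: nat assume "k \<le> n"
      then have "prodk e n $ k = prodk e k $ k" by (intro prodk_stab) auto
      then show "prodk e n $ k = P $ k" using h by simp
    qed
  qed
qed

definition intc :: "rfps \<Rightarrow> bool" where "intc f \<longleftrightarrow> (\<forall>i. f $ i \<in> \<int>)"

lemma intc_mult: "intc f \<Longrightarrow> intc g \<Longrightarrow> intc (f * g)"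
  unfolding intc_def fps_mult_nth by (auto intro!: Ints_sum Ints_mult)

lemma intc_one: "intc 1"
  unfolding intc_def by (auto simp: fps_one_nth)

lemma intc_power: "intc f \<Longrightarrow> intc (f ^ n)"
  by (induction n) (auto intro: intc_mult intc_one)

lemma inverse_rec:
  assumes f0: "f $ 0 = (1::rat)" and n: "n > 0"
  shows "inverse f $ n = - (\<Sum>j\<in>{0..<n}. inverse f $ j * f $ (n - j))"
proof -
  have hf: "inverse f * f = 1" using f0 by (intro inverse_mult_eq_1) simp
  have "0 = (inverse f * f) $ n" using hf n by simp
  also have "\<dots> = (\<Sum>j\<in>insert n {0..<n}. inverse f $ j * f $ (n - j))"
    unfolding fps_mult_nth by (rule sum.cong) auto
  also have "\<dots> = inverse f $ n + (\<Sum>j\<in>{0..<n}. inverse f $ j * f $ (n - j))"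
    using f0 by simp
  finally show ?thesis by (simp add: eq_neg_iff_add_eq_0)
qed

lemma intc_inverse:
  assumes f0: "f $ 0 = 1" and f: "intc f" shows "intc (inverse f)"
  unfolding intc_def
proof
  fix n show "inverse f $ n \<in> \<int>"
  proof (induction n rule: less_induct)
    case (less n)
    show ?case
    proof (cases "n = 0")
      case True then show ?thesis using f0 by simp
    next
      case False
      then show ?thesis using inverse_rec[OF f0, of n] less f unfolding intc_def
        by (auto intro!: Ints_sum Ints_mult Ints_minus)
    qed
  qed
qed

lemma intc_fac: assumes "j \<ge> 1" shows "intc (fac j c)"
proof -
  have b: "intc (1 - fps_X ^ j)" unfolding intc_def by auto
  have b0: "(1 - fps_X ^ j :: rfps) $ 0 = 1 \<or> j = 0" by auto
  show ?thesis
  proof (cases "j = 0")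
    case True then show ?thesis using \<open>j \<ge> 1\<close> by simp
  next
    case False
    then show ?thesis using b b0
      by (auto simp: fac_def power_int_def intro!: intc_power intc_inverse)
  qed
qed

lemma intc_prodk: "intc (prodk e n)"
  by (induction n) (auto simp: prodk_Suc intro!: intc_mult intc_fac intc_one)

definition supp_in :: "nat set \<Rightarrow> rfps \<Rightarrow> bool" where
  "supp_in M f \<longleftrightarrow> (\<forall>i. i \<notin> M \<longrightarrow> f $ i = 0)"

definition submon :: "nat set \<Rightarrow> bool" where
  "submon M \<longleftrightarrow> 0 \<in> M \<and> (\<forall>a\<in>M. \<forall>b\<in>M. a + b \<in> M)"

lemma supp_mult:
  assumes M: "submon M" and f: "supp_in M f" and g: "supp_in M g"
  shows "supp_in M (f * g)"
  unfolding supp_in_def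
proof safe
  fix i assume i: "i \<notin> M"
  show "(f * g) $ i = 0" unfolding fps_mult_nth
  proof (rule sum.neutral, safe)
    fix j assume j: "j \<in> {0..i}"
    show "f $ j * g $ (i - j) = 0"
    proof (cases "j \<in> M \<and> i - j \<in> M")
      case True
      then have "j + (i - j) \<in> M" using M unfolding submon_def by blast
      then show ?thesis using i j by auto
    next
      case False then show ?thesis using f g unfolding supp_in_def by auto
    qed
  qed
qed

lemma supp_one: "submon M \<Longrightarrow> supp_in M 1"
  unfolding supp_in_def submon_def by (auto simp: fps_one_nth)

lemma supp_power: "submon M \<Longrightarrow> supp_in M f \<Longrightarrow> supp_in M (f ^ n)"
  by (induction n) (auto intro: supp_mult supp_one)

lemma supp_inverse:
  assumes M: "submon M" and f0: "f $ 0 = 1" and f: "supp_in M f"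
  shows "supp_in M (inverse f)"
  unfolding supp_in_def
proof (intro allI impI)
  fix n assume "n \<notin> M"
  then show "inverse f $ n = 0"
  proof (induction n rule: less_induct)
    case (less n)
    have n0: "n > 0" using less M unfolding submon_def by (cases n) auto
    have "(\<Sum>j\<in>{0..<n}. inverse f $ j * f $ (n - j)) = 0"
    proof (rule sum.neutral, safe)
      fix j assume j: "j \<in> {0..<n}"
      show "inverse f $ j * f $ (n - j) = 0"
      proof (cases "j \<in> M")
        case True
        have "n - j \<notin> M"
        proof
          assume "n - j \<in> M"
          then have "j + (n - j) \<in> M" using True M unfolding submon_def by blast
          then show False using less(2) j by simp
        qed
        then show ?thesis using f unfolding supp_in_def by simp
      next
        case False then show ?thesis using less j by auto
      qed
    qed
    then show ?case using inverse_rec[OF f0 n0] by simp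
  qed
qed

lemma supp_fac:
  assumes M: "submon M" and j: "j \<in> M" and j1: "j \<ge> 1"
  shows "supp_in M (fac j c)"
proof -
  have b: "supp_in M (1 - fps_X ^ j)" using M j unfolding supp_in_def submon_def by auto
  show ?thesis
  proof (cases "j = 0")
    case True then show ?thesis using j1 by simp
  next
    case False
    then have "(1 - fps_X ^ j :: rfps) $ 0 = 1" by auto
    then show ?thesis using b M
      by (auto simp: fac_def power_int_def intro!: supp_power supp_inverse)
  qed
qed

lemma supp_prod:
  assumes M: "submon M" and "finite A" and "\<And>x. x \<in> A \<Longrightarrow> supp_in M (f x)"
  shows "supp_in M (\<Prod>x\<in>A. f x)"
  using assms(2,3) by (induction A rule: finite_induct) (auto intro: supp_mult supp_one M)

primrec bld :: "rfps \<Rightarrow> nat \<Rightarrow> nat \<Rightarrow> int" where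
  "bld P 0 = (\<lambda>_. 0)"
| "bld P (Suc k) = (bld P k)(Suc k := \<lfloor>prodk (bld P k) k $ Suc k - P $ Suc k\<rfloor>)"

lemma bld_stab: "j \<le> k \<Longrightarrow> k \<le> m \<Longrightarrow> bld P m j = bld P k j"
proof (induction m)
  case 0 then show ?case by simp
next
  case (Suc m)
  then show ?case by (cases "k = Suc m") auto
qed

definition ecyc :: "rfps \<Rightarrow> nat \<Rightarrow> int" where "ecyc P k = bld P k k"

lemma prodk_ecyc: "prodk (ecyc P) k = prodk (bld P k) k"
proof (rule prodk_cong)
  fix j assume "1 \<le> j" "j \<le> k"
  then show "ecyc P j = bld P k j" unfolding ecyc_def using bld_stab[of j j k P] by simp
qed

lemma of_int_floor_Ints: "x \<in> \<int> \<Longrightarrow> of_int \<lfloor>x\<rfloor> = (x::rat)"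
  by (erule Ints_cases) simp

lemma exists_exp:
  assumes P0: "P $ 0 = 1" and P: "intc P"
  shows "ecyc P 0 = 0 \<and> (\<forall>k. prodk (ecyc P) k $ k = P $ k)"
proof (intro conjI allI)
  show "ecyc P 0 = 0" by (simp add: ecyc_def)
  fix k show "prodk (ecyc P) k $ k = P $ k"
  proof (cases k)
    case 0 then show ?thesis using P0 by simp
  next
    case (Suc k')
    define x where "x = prodk (bld P k') k' $ Suc k' - P $ Suc k'"
    have xi: "x \<in> \<int>" unfolding x_def using intc_prodk P unfolding intc_def by (auto intro: Ints_diff)
    have "prodk (ecyc P) (Suc k') $ Suc k' = prodk (ecyc P) k' $ Suc k' - of_int (ecyc P (Suc k'))"
      by (rule prodk_rec)
    also have "\<dots> = prodk (bld P k') k' $ Suc k' - x"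
      unfolding prodk_ecyc by (simp add: ecyc_def x_def[symmetric] of_int_floor_Ints[OF xi])
    also have "\<dots> = P $ Suc k'" unfolding x_def by simp
    finally show ?thesis using Suc by simp
  qed
qed

lemma unique_exp:
  assumes "e 0 = 0" "e' 0 = 0" "\<forall>k. prodk e k $ k = P $ k" "\<forall>k. prodk e' k $ k = P $ k"
  shows "e = e'"
proof
  fix k show "e k = e' k"
  proof (induction k rule: less_induct)
    case (less k)
    show ?case
    proof (cases k)
      case 0 then show ?thesis using assms by simp
    next
      case (Suc k')
      have eq: "prodk e k' = prodk e' k'" by (rule prodk_cong) (use less Suc in auto)
      have "(of_int (e k) :: rat) = prodk e k' $ Suc k' - prodk e (Suc k') $ Suc k'"
        using prodk_rec[of e k'] Suc by simp
      also have "\<dots> = prodk e' k' $ Suc k' - prodk e' (Suc k') $ Suc k'"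
        using eq assms(3,4) by simp
      also have "\<dots> = of_int (e' k)"
        using prodk_rec[of e' k'] Suc by simp
      finally show ?thesis by simp
    qed
  qed
qed

definition PS :: "nat set \<Rightarrow> rfps" where "PS S = (1 - fps_X) * sg_series S"

lemma sg_nth: "sg_series S $ k = (if k \<in> S then 1 else 0)"
  by (simp add: sg_series_def)

lemma PS_nth: "PS S $ k = sg_series S $ k - (if k = 0 then 0 else sg_series S $ (k - 1))"
proof -
  have "PS S = sg_series S - fps_X * sg_series S" unfolding PS_def by (simp add: algebra_simps)
  then show ?thesis by simp
qed

lemma cyc_exp_char:
  assumes "0 \<in> S"
  shows "\<forall>k. prodk (cyc_exp S) k $ k = PS S $ k"
proof -
  have P0: "PS S $ 0 = 1" using assms by (simp add: PS_nth sg_nth)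
  have Pi: "intc (PS S)" unfolding intc_def PS_nth sg_nth by (simp add: Ints_diff)
  have iff: "is_cyc_exp_seq S e \<longleftrightarrow> (\<forall>k. prodk e k $ k = PS S $ k)" for e
    using cyc_iff[of e "PS S"] unfolding is_cyc_exp_seq_def prodk_def fac_def PS_def by simp
  have "\<exists>!e. is_cyc_exp_seq S e \<and> e 0 = 0"
  proof (rule ex1I[of _ "ecyc (PS S)"])
    show "is_cyc_exp_seq S (ecyc (PS S)) \<and> ecyc (PS S) 0 = 0"
      using exists_exp[OF P0 Pi] iff by blast
  next
    fix e assume "is_cyc_exp_seq S e \<and> e 0 = 0"
    then show "e = ecyc (PS S)"
      using exists_exp[OF P0 Pi] iff unique_exp by blast
  qed
  from theI'[OF this] show ?thesis unfolding cyc_exp_def[symmetric] using iff by blast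
qed



lemma ns_0: "numerical_semigroup S \<Longrightarrow> 0 \<in> S"
  unfolding numerical_semigroup_def by simp
lemma ns_add: "numerical_semigroup S \<Longrightarrow> a \<in> S \<Longrightarrow> b \<in> S \<Longrightarrow> a + b \<in> S"
  unfolding numerical_semigroup_def by simp
lemma ns_submon: "numerical_semigroup S \<Longrightarrow> submon S"
  unfolding numerical_semigroup_def submon_def by simp
lemma ns_mult: "numerical_semigroup S \<Longrightarrow> a \<in> S \<Longrightarrow> r * a \<in> S"
  by (induction r) (auto simp: ns_0 ns_add)
lemma ns_sum: assumes "numerical_semigroup S" "finite B" "\<And>x. x \<in> B \<Longrightarrow> g x \<in> S" shows "sum g B \<in> S"
  using assms(2,3) by (induction B rule: finite_induct) (auto simp: ns_0[OF assms(1)] ns_add[OF assms(1)])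

lemma mg_S: "a \<in> min_gens S \<Longrightarrow> a \<in> S" unfolding min_gens_def by simp
lemma mg_0: "a \<in> min_gens S \<Longrightarrow> a \<noteq> 0" unfolding min_gens_def by simp
lemma mg_atom: "a \<in> min_gens S \<Longrightarrow> x \<in> S \<Longrightarrow> y \<in> S \<Longrightarrow> a = x + y \<Longrightarrow> x = 0 \<or> y = 0"
  unfolding min_gens_def by blast

lemma mg_finite:
  assumes ns: "numerical_semigroup S" shows "finite (min_gens S)"
proof -
  have "finite (UNIV - S)" using ns unfolding numerical_semigroup_def by simp
  then obtain F where F0: "\<forall>n\<in>UNIV - S. n \<le> F"
    unfolding finite_nat_set_iff_bounded_le by blast
  have F: "n \<le> F" if "n \<in> UNIV - S" for n using F0 that by blast
  have FS: "n \<in> S" if "n > F" for n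
  proof (rule ccontr)
    assume "n \<notin> S" then have "n \<le> F" using F by blast
    then show False using that by simp
  qed
  have "min_gens S \<subseteq> {..2*F+2}"
  proof
    fix a assume a: "a \<in> min_gens S"
    show "a \<in> {..2*F+2}"
    proof (rule ccontr)
      assume "a \<notin> {..2*F+2}"
      then have "a > 2*F+2" by simp
      have h1: "F + 1 \<in> S" using FS by simp
      have h2: "a - (F+1) \<in> S" using FS \<open>a > 2*F+2\<close> by simp
      have h3: "a = (F + 1) + (a - (F+1))" using \<open>a > 2*F+2\<close> by simp
      have "F + 1 = 0 \<or> a - (F+1) = 0" by (rule mg_atom[OF a h1 h2 h3])
      then show False using \<open>a > 2*F+2\<close> by simp
    qed
  qed
  then show ?thesis by (rule finite_subset) simp
qed

lemma submon_dvd: "submon {m. j dvd m}"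
  unfolding submon_def by auto

lemma fac_zero[simp]: "fac j 0 = 1" by (simp add: fac_def)

context
  fixes S :: "nat set"
  assumes ns: "numerical_semigroup S"
begin

abbreviation "e \<equiv> cyc_exp S"
definition e' :: "nat \<Rightarrow> int" where "e' j = e j - (if j = 1 then 1 else 0)"
abbreviation "Q \<equiv> prodk e'"
abbreviation "H \<equiv> sg_series S"

lemma echar: "prodk e k $ k = PS S $ k"
  using cyc_exp_char[OF ns_0[OF ns]] by blast

lemma e1: "e 1 = (if 1 \<in> S then 0 else 1)"
proof -
  have "prodk e 1 $ 1 = - of_int (e 1)" using prodk_rec[of e 0] by simp
  moreover have "PS S $ 1 = (if 1 \<in> S then 0 else -1)" using ns_0[OF ns] by (simp add: PS_nth sg_nth)
  ultimately show ?thesis using echar[of 1] by (auto split: if_splits)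
qed

lemma fac1: "fac 1 (e 1) = (1 - fps_X) * fac 1 (e' 1)"
proof (cases "1 \<in> S")
  case True
  then have "e 1 = 0" "e' 1 = -1" using e1 by (auto simp: e'_def)
  moreover have "(1 - fps_X) * inverse (1 - fps_X) = (1::rfps)"
    by (rule inverse_mult_eq_1') simp
  ultimately show ?thesis by (simp add: fac_def power_int_def)
next
  case False
  then have "e 1 = 1" "e' 1 = 0" using e1 by (auto simp: e'_def)
  then show ?thesis by (simp add: fac_def power_int_def)
qed

lemma prodk_Q: "n \<ge> 1 \<Longrightarrow> prodk e n = (1 - fps_X) * Q n"
proof (induction n rule: dec_induct)
  case base
  show ?case using fac1 by (simp add: prodk_Suc[of _ 0, simplified])
next
  case (step n)
  then have "e' (Suc n) = e (Suc n)" by (simp add: e'_def)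
  then show ?case using step by (simp add: prodk_Suc mult.assoc)
qed

lemma HQ: "Q i $ i = H $ i"
proof (induction i rule: less_induct)
  case (less i)
  show ?case
  proof (cases i)
    case 0 then show ?thesis using ns_0[OF ns] by (simp add: sg_nth)
  next
    case (Suc k)
    have "PS S $ Suc k = prodk e (Suc k) $ Suc k" using echar by simp
    also have "\<dots> = ((1 - fps_X) * Q (Suc k)) $ Suc k" using prodk_Q[of "Suc k"] by simp
    also have "\<dots> = Q (Suc k) $ Suc k - Q (Suc k) $ k" by (simp add: algebra_simps)
    also have "Q (Suc k) $ k = Q k $ k" by (rule prodk_stab) auto
    also have "\<dots> = H $ k" using less Suc by simp
    finally show ?thesis using Suc by (simp add: PS_nth)
  qed
qed

lemma Qrec: "of_int (e' (Suc k)) = Q k $ Suc k - H $ Suc k"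
  using prodk_rec[of e' k] HQ[of "Suc k"] by simp

lemma Q_supp:
  assumes "\<And>j. 1 \<le> j \<Longrightarrow> j \<le> n \<Longrightarrow> e' j \<noteq> 0 \<Longrightarrow> j \<in> S"
  shows "supp_in S (Q n)"
  unfolding prodk_def
proof (rule supp_prod[OF ns_submon[OF ns]])
  fix j assume j: "j \<in> {1..n}"
  show "supp_in S (fac j (e' j))"
  proof (cases "e' j = 0")
    case True then show ?thesis by (simp add: supp_one ns_submon[OF ns])
  next
    case False then show ?thesis using assms j by (intro supp_fac ns_submon[OF ns]) auto
  qed
qed simp

lemma claimA: "k \<ge> 1 \<Longrightarrow> k \<notin> S \<Longrightarrow> e' k = 0"
proof (induction k rule: less_induct)
  case (less k)
  obtain k' where k: "k = Suc k'" using less by (cases k) auto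
  have "supp_in S (Q k')"
  proof (rule Q_supp)
    fix j assume j: "1 \<le> j" "j \<le> k'" "e' j \<noteq> 0"
    show "j \<in> S"
    proof (rule ccontr)
      assume "j \<notin> S"
      then have "e' j = 0" using less.IH[of j] j k by simp
      then show False using j by simp
    qed
  qed
  then have "Q k' $ k = 0" using less unfolding supp_in_def by simp
  moreover have "H $ k = 0" using less by (simp add: sg_nth)
  ultimately show ?case using Qrec[of k'] k by simp
qed

lemma Q_supp_all: "supp_in S (Q n)"
  by (rule Q_supp) (use claimA in force)

lemma fac_supp: assumes j: "j \<ge> 1" shows "supp_in S (fac j (e' j))"
proof (cases "e' j = 0")
  case True then show ?thesis by (simp add: supp_one ns_submon[OF ns])
next
  case False
  then have "j \<in> S" using claimA[of j] j by blast
  then show ?thesis by (rule supp_fac[OF ns_submon[OF ns] _ j])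
qed

lemma atom_e: assumes a: "a \<in> min_gens S" shows "e' a = -1"
proof -
  have a0: "a \<ge> 1" using mg_0[OF a] by simp
  have aS: "a \<in> S" using mg_S[OF a] .
  have "\<forall>n. n < a \<longrightarrow> Q n $ a = 0"
  proof (intro allI)
    fix n show "n < a \<longrightarrow> Q n $ a = 0"
    proof (induction n)
      case 0 then show ?case using a0 by simp
    next
      case (Suc n)
      show ?case
      proof
        assume n: "Suc n < a"
        define F where "F = fac (Suc n) (e' (Suc n))"
        have Fs: "supp_in S F" unfolding F_def by (rule fac_supp) simp
        have Fa: "F $ a = 0"
        proof (cases "e' (Suc n) = 0")
          case True then show ?thesis using a0 by (simp add: F_def)
        next
          case False
          then have nS: "Suc n \<in> S" using claimA[of "Suc n"] by auto
          have "supp_in {m. Suc n dvd m} F" unfolding F_def by (rule supp_fac[OF submon_dvd]) auto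
          moreover have "\<not> Suc n dvd a"
          proof
            assume "Suc n dvd a"
            then obtain r where r: "a = Suc n * r" by blast
            then have "r \<ge> 2" using n a0 by (cases r; cases "r - 1") auto
            then have "a = Suc n + (r - 1) * Suc n" using r by (cases r) auto
            moreover have "(r - 1) * Suc n \<in> S" using ns_mult[OF ns nS] .
            ultimately show False using mg_atom[OF a, of "Suc n" "(r-1) * Suc n"] nS \<open>r \<ge> 2\<close> by auto
          qed
          ultimately show ?thesis unfolding supp_in_def by simp
        qed
        have "Q (Suc n) $ a = (\<Sum>i=0..a. Q n $ i * F $ (a - i))"
          unfolding prodk_Suc F_def fps_mult_nth ..
        also have "\<dots> = 0"
        proof (rule sum.neutral, safe)
          fix i assume i: "i \<in> {0..a}"
          show "Q n $ i * F $ (a - i) = 0"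
          proof (cases "i = a")
            case True then show ?thesis using Suc n by simp
          next
            case ia: False
            show ?thesis
            proof (cases "i = 0")
              case True then show ?thesis using Fa by simp
            next
              case False
              show ?thesis
              proof (cases "i \<in> S \<and> a - i \<in> S")
                case True
                then show ?thesis using mg_atom[OF a, of i "a - i"] i ia False by auto
              next
                case False
                then show ?thesis using Q_supp_all[of n] Fs unfolding supp_in_def by auto
              qed
            qed
          qed
        qed
        finally show "Q (Suc n) $ a = 0" .
      qed
    qed
  qed
  then have "Q (a - 1) $ a = 0" using a0 by simp
  then show ?thesis using Qrec[of "a - 1"] a0 aS by (simp add: sg_nth)
qed

end


definition facts :: "nat set \<Rightarrow> nat \<Rightarrow> (nat \<Rightarrow> nat) set" where
  "facts B n = {f. (\<forall>a. a \<notin> B \<longrightarrow> f a = 0) \<and> (\<Sum>a\<in>B. f a * a) = n}"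

lemma inv_geo:
  assumes a: "a \<ge> 1"
  shows "inverse (1 - fps_X ^ a :: rfps) = Abs_fps (\<lambda>i. if a dvd i then 1 else 0)"
proof (rule fps_inverse_unique)
  show "(1 - fps_X ^ a) * Abs_fps (\<lambda>i. if a dvd i then 1 else 0) = (1::rfps)"
  proof (rule fps_ext)
    fix n
    have "((1 - fps_X ^ a) * Abs_fps (\<lambda>i. if a dvd i then 1 else 0)) $ n =
          (if a dvd n then 1 else 0) - (if n < a then 0 else (if a dvd (n - a) then 1 else 0) :: rat)"
      by (simp add: algebra_simps fps_X_power_mult_nth)
    also have "\<dots> = (1::rfps) $ n"
    proof (cases "n < a")
      case True
      then show ?thesis using a by (cases "n = 0") (auto dest: dvd_imp_le)
    next
      case False
      then have "a dvd (n - a) \<longleftrightarrow> a dvd n" by (simp add: dvd_diff_nat dvd_minus_self)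
      then show ?thesis using False a by auto
    qed
    finally show "((1 - fps_X ^ a) * Abs_fps (\<lambda>i. if a dvd i then 1 else 0)) $ n = (1::rfps) $ n" .
  qed
qed

lemma facts_empty: "facts {} n = (if n = 0 then {\<lambda>_. 0} else {})"
  unfolding facts_def by auto

lemma facts_insert:
  assumes B: "finite B" and b: "b \<notin> B"
  shows "facts (insert b B) n = (\<lambda>(r,g). g(b:=r)) ` (SIGMA r:{r. r*b \<le> n}. facts B (n - r*b))"
proof
  show "facts (insert b B) n \<subseteq> (\<lambda>(r,g). g(b:=r)) ` (SIGMA r:{r. r*b \<le> n}. facts B (n - r*b))"
  proof
    fix f assume f: "f \<in> facts (insert b B) n"
    define g where "g = f(b:=0)"
    have s1: "(\<Sum>a\<in>B. g a * a) = (\<Sum>a\<in>B. f a * a)"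
      by (rule sum.cong) (use b in \<open>auto simp: g_def\<close>)
    have s2: "n = f b * b + (\<Sum>a\<in>B. f a * a)" using f B b unfolding facts_def by simp
    have "g \<in> facts B (n - f b * b)" unfolding facts_def using s1 s2 f unfolding facts_def g_def by auto
    moreover have "f b * b \<le> n" using s2 by simp
    moreover have "f = g(b := f b)" unfolding g_def by simp
    ultimately show "f \<in> (\<lambda>(r,g). g(b:=r)) ` (SIGMA r:{r. r*b \<le> n}. facts B (n - r*b))"
      by (intro rev_image_eqI[of "(f b, g)"]) auto
  qed
next
  show "(\<lambda>(r,g). g(b:=r)) ` (SIGMA r:{r. r*b \<le> n}. facts B (n - r*b)) \<subseteq> facts (insert b B) n"
  proof safe
    fix r g assume r: "r * b \<le> n" and g: "g \<in> facts B (n - r*b)"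
    have s1: "(\<Sum>a\<in>B. (g(b:=r)) a * a) = (\<Sum>a\<in>B. g a * a)"
      by (rule sum.cong) (use b in auto)
    have "(\<Sum>a\<in>insert b B. (g(b:=r)) a * a) = r * b + (\<Sum>a\<in>B. g a * a)"
      using B b s1 by simp
    also have "\<dots> = n" using g r unfolding facts_def by simp
    finally show "g(b:=r) \<in> facts (insert b B) n" using g unfolding facts_def by auto
  qed
qed

lemma facts_inj:
  assumes b: "b \<notin> B"
  shows "inj_on (\<lambda>(r,g). g(b:=r)) (SIGMA r:{r. r*b \<le> n}. facts B (n - r*b))"
proof (rule inj_onI, clarify)
  fix r g r' g'
  assume g: "g \<in> facts B (n - r*b)" and g': "g' \<in> facts B (n - r'*b)" and eq: "g(b := r) = g'(b := r')"
  have "r = r'" using fun_cong[OF eq, of b] by simp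
  moreover have "g = g'"
  proof
    fix a show "g a = g' a"
    proof (cases "a = b")
      case True then show ?thesis using g g' b unfolding facts_def by auto
    next
      case False then show ?thesis using fun_cong[OF eq, of a] by simp
    qed
  qed
  ultimately show "r = r' \<and> g = g'" by simp
qed

lemma count_facts:
  assumes "finite B" "0 \<notin> B"
  shows "finite (facts B n) \<and> (\<Prod>a\<in>B. inverse (1 - fps_X ^ a) :: rfps) $ n = of_nat (card (facts B n))"
  using assms
proof (induction B arbitrary: n rule: finite_induct)
  case empty then show ?case by (simp add: facts_empty)
next
  case (insert b B)
  have b1: "b \<ge> 1" using insert by (cases b) auto
  define D where "D = (\<Prod>a\<in>B. inverse (1 - fps_X ^ a) :: rfps)"
  have IH: "\<And>m. finite (facts B m) \<and> D $ m = of_nat (card (facts B m))"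
    using insert unfolding D_def by simp
  define R where "R = {r. r*b \<le> n}"
  have "R \<subseteq> {..n}"
  proof
    fix r assume "r \<in> R"
    then have h1: "r * b \<le> n" unfolding R_def by simp
    have h2: "r \<le> r * b" using b1 by simp
    show "r \<in> {..n}" using order.trans[OF h2 h1] by simp
  qed
  then have Rfin: "finite R" by (rule finite_subset) simp
  have Sfin: "finite (SIGMA r:R. facts B (n - r*b))" using Rfin IH by auto
  have fe: "facts (insert b B) n = (\<lambda>(r,g). g(b:=r)) ` (SIGMA r:R. facts B (n - r*b))"
    unfolding R_def by (rule facts_insert) (use insert in auto)
  have card: "card (facts (insert b B) n) = (\<Sum>r\<in>R. card (facts B (n - r*b)))"
    unfolding fe using card_image[OF facts_inj[of b B n]] insert Rfin IH
    by (simp add: R_def)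
  have bij: "bij_betw (\<lambda>r. n - r*b) R {i\<in>{0..n}. b dvd (n - i)}"
  proof (rule bij_betw_byWitness[of _ "\<lambda>i. (n - i) div b"])
    show "\<forall>r\<in>R. (n - (n - r*b)) div b = r" using b1 unfolding R_def by auto
    show "\<forall>i\<in>{i\<in>{0..n}. b dvd (n - i)}. n - (n - i) div b * b = i" by auto
    show "(\<lambda>r. n - r*b) ` R \<subseteq> {i\<in>{0..n}. b dvd (n - i)}" unfolding R_def by auto
    show "(\<lambda>i. (n - i) div b) ` {i\<in>{0..n}. b dvd (n - i)} \<subseteq> R" unfolding R_def
      by (auto elim!: dvdE simp: mult.commute[of _ b])
  qed
  have "(\<Prod>a\<in>insert b B. inverse (1 - fps_X ^ a) :: rfps) $ n = (D * Abs_fps (\<lambda>i. if b dvd i then 1 else 0)) $ n"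
    using insert inv_geo[OF b1] by (simp add: D_def mult.commute)
  also have "\<dots> = (\<Sum>i=0..n. if b dvd (n - i) then D $ i else 0)"
    unfolding fps_mult_nth by (rule sum.cong) auto
  also have "\<dots> = (\<Sum>i\<in>{i\<in>{0..n}. b dvd (n - i)}. D $ i)"
    by (rule sum.inter_filter[symmetric]) simp
  also have "\<dots> = (\<Sum>r\<in>R. D $ (n - r*b))"
    using sum.reindex_bij_betw[OF bij, of "\<lambda>i. D $ i"] by simp
  also have "\<dots> = of_nat (card (facts (insert b B) n))"
    unfolding card using IH by simp
  finally show ?case using fe Sfin by simp
qed



definition congL :: "nat set \<Rightarrow> rfps \<Rightarrow> rfps \<Rightarrow> bool" where
  "congL L f g \<longleftrightarrow> (\<forall>n\<in>L. f $ n = g $ n)"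

context
  fixes S :: "nat set" and s :: nat
  assumes ns: "numerical_semigroup S" and sS: "s \<in> S"
begin

definition L :: "nat set" where "L = {j. j \<le> s \<and> s - j \<in> S}"

lemma L_down: "n \<in> L \<Longrightarrow> i \<le> n \<Longrightarrow> n - i \<in> S \<Longrightarrow> i \<in> L"
proof -
  assume n: "n \<in> L" and i: "i \<le> n" and ni: "n - i \<in> S"
  have "s - i = (s - n) + (n - i)" using n i unfolding L_def by auto
  moreover have "(s - n) + (n - i) \<in> S" using n ni unfolding L_def by (intro ns_add[OF ns]) auto
  ultimately show "i \<in> L" using n i unfolding L_def by auto
qed

lemma cong_mult:
  assumes fg: "congL L f g" and h: "supp_in S h"
  shows "congL L (f * h) (g * h)"
  unfolding congL_def
proof
  fix n assume n: "n \<in> L"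
  show "(f * h) $ n = (g * h) $ n" unfolding fps_mult_nth
  proof (rule sum.cong)
    fix i assume i: "i \<in> {0..n}"
    show "f $ i * h $ (n - i) = g $ i * h $ (n - i)"
    proof (cases "n - i \<in> S")
      case True
      then have "i \<in> L" using L_down[OF n] i by simp
      then show ?thesis using fg unfolding congL_def by simp
    next
      case False then show ?thesis using h unfolding supp_in_def by simp
    qed
  qed simp
qed

lemma cong_trans: "congL L f g \<Longrightarrow> congL L g h \<Longrightarrow> congL L f h"
  unfolding congL_def by simp

lemma fac_cong1:
  assumes j: "j \<ge> 1" "j \<in> S" "j \<notin> L"
  shows "congL L (fac j c) 1"
  unfolding congL_def
proof
  fix n assume n: "n \<in> L"
  show "fac j c $ n = 1 $ n"
  proof (cases "n = 0")
    case True then show ?thesis using fac_0 j by simp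
  next
    case False
    have "supp_in {m. j dvd m} (fac j c)" by (rule supp_fac[OF submon_dvd]) (use j in auto)
    moreover have "\<not> j dvd n"
    proof
      assume "j dvd n"
      then obtain r where r: "n = j * r" by blast
      then have r1: "r \<ge> 1" using False by (cases r) auto
      have "n - j = (r - 1) * j" using r r1 by (cases r) (auto simp: algebra_simps)
      then have "n - j \<in> S" using ns_mult[OF ns j(2)] by simp
      moreover have "j \<le> n" using r r1 by simp
      ultimately have "j \<in> L" using L_down[OF n] by simp
      then show False using j by simp
    qed
    ultimately show ?thesis using False unfolding supp_in_def by simp
  qed
qed

lemma main:
  assumes nf: "nfact S s \<ge> 2"
  shows "\<exists>d\<in>cycE S. sg_le S d s"
proof (rule ccontr)
  assume neg: "\<not> (\<exists>d\<in>cycE S. sg_le S d s)"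
  define A where "A = min_gens S"
  have Afin: "finite A" unfolding A_def by (rule mg_finite[OF ns])
  have AS: "a \<in> S" if "a \<in> A" for a using mg_S that unfolding A_def by blast
  have A0: "0 \<notin> A" unfolding A_def using mg_0 by blast
  have H0: "cyc_exp S j = 0" if "j \<in> L" "2 \<le> j" "j \<notin> A" for j
    using neg that unfolding cycE_def sg_le_def L_def A_def by auto
  have eL: "e' S j = (if j \<in> A then -1 else 0)" if j: "j \<in> L" "1 \<le> j" for j
  proof (cases "j \<in> A")
    case True then show ?thesis using atom_e[OF ns] unfolding A_def by simp
  next
    case False
    show ?thesis
    proof (cases "j = 1")
      case True
      have "1 \<notin> S"
      proof
        assume "1 \<in> S"
        then have "(1::nat) \<in> A" unfolding A_def min_gens_def by auto
        then show False using False True by simp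
      qed
      then have "cyc_exp S 1 = 1" using e1[OF ns] by simp
      then show ?thesis using True False e'_def[OF ns, of 1] by simp
    next
      case False2: False
      then show ?thesis using H0[of j] j False e'_def[OF ns, of j] by simp
    qed
  qed
  define d' where "d' j = (if j \<in> A \<inter> L then -1 else (0::int))" for j
  have Dsupp: "supp_in S (prodk d' k)" for k
    unfolding prodk_def
  proof (rule supp_prod[OF ns_submon[OF ns]])
    fix j assume j: "j \<in> {1..k}"
    show "supp_in S (fac j (d' j))"
    proof (cases "j \<in> A \<inter> L")
      case True then show ?thesis using AS j by (intro supp_fac ns_submon[OF ns]) auto
    next
      case False then have "d' j = 0" by (simp add: d'_def)
      then show ?thesis by (simp add: supp_one ns_submon[OF ns])
    qed
  qed simp
  have cQD: "congL L (prodk (e' S) k) (prodk d' k)" for k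
  proof (induction k)
    case 0 then show ?case by (simp add: congL_def)
  next
    case (Suc k)
    define F where "F = fac (Suc k) (e' S (Suc k))"
    have Fs: "supp_in S F" unfolding F_def by (rule fac_supp[OF ns]) simp
    show ?case
    proof (cases "Suc k \<in> L")
      case True
      then have "e' S (Suc k) = d' (Suc k)" using eL[of "Suc k"] by (simp add: d'_def)
      then have D: "prodk d' (Suc k) = prodk d' k * F" by (simp add: prodk_Suc F_def)
      have Q: "prodk (e' S) (Suc k) = prodk (e' S) k * F" by (simp add: prodk_Suc F_def)
      show ?thesis unfolding D Q by (rule cong_mult[OF Suc Fs])
    next
      case False
      then have D: "prodk d' (Suc k) = prodk d' k" by (simp add: prodk_Suc d'_def)
      have "congL L (prodk (e' S) k * F) (prodk (e' S) k)"
      proof (cases "e' S (Suc k) = 0")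
        case True then show ?thesis by (simp add: F_def congL_def)
      next
        case nz: False
        then have "Suc k \<in> S" using claimA[OF ns, of "Suc k"] by auto
        then have "congL L F 1" unfolding F_def using False by (intro fac_cong1) auto
        from cong_mult[OF this Q_supp_all[OF ns, of k]] show ?thesis by (simp add: mult.commute)
      qed
      then have "congL L (prodk (e' S) k * F) (prodk d' k)" by (rule cong_trans[OF _ Suc])
      moreover have "prodk (e' S) (Suc k) = prodk (e' S) k * F" by (simp add: prodk_Suc F_def)
      ultimately show ?thesis unfolding D by simp
    qed
  qed
  have sL: "s \<in> L" unfolding L_def using ns_0[OF ns] by simp
  have "prodk (e' S) s $ s = 1" using HQ[OF ns, of s] sS by (simp add: sg_nth)
  then have D1: "prodk d' s $ s = 1" using cQD[of s] sL unfolding congL_def by simp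
  have ALsub: "A \<inter> L \<subseteq> {1..s}" using A0 unfolding L_def by (auto simp: Suc_le_eq intro: gr0I)
  have "prodk d' s = (\<Prod>j\<in>A \<inter> L. fac j (d' j))"
    unfolding prodk_def
    by (rule prod.mono_neutral_right) (use ALsub in \<open>auto simp: d'_def\<close>)
  also have "\<dots> = (\<Prod>j\<in>A \<inter> L. inverse (1 - fps_X ^ j))"
    by (rule prod.cong) (auto simp: d'_def fac_def power_int_def)
  finally have "(\<Prod>j\<in>A \<inter> L. inverse (1 - fps_X ^ j) :: rfps) $ s = 1" using D1 by simp
  moreover have cf: "finite (facts (A \<inter> L) s) \<and>
      (\<Prod>j\<in>A \<inter> L. inverse (1 - fps_X ^ j) :: rfps) $ s = of_nat (card (facts (A \<inter> L) s))"
    by (rule count_facts) (use Afin A0 in auto)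
  ultimately have c1: "card (facts (A \<inter> L) s) = 1" by simp
  have sub: "factorizations S s \<subseteq> facts (A \<inter> L) s"
  proof
    fix f assume f: "f \<in> factorizations S s"
    have fA: "\<forall>a. a \<notin> A \<longrightarrow> f a = 0" and fs: "(\<Sum>a\<in>A. f a * a) = s"
      using f unfolding factorizations_def A_def by auto
    have fL: "a \<in> L" if a: "a \<in> A" "f a \<noteq> 0" for a
    proof -
      have "s = f a * a + (\<Sum>c\<in>A - {a}. f c * c)"
        using fs sum.remove[OF Afin a(1), of "\<lambda>c. f c * c"] by simp
      moreover have "(\<Sum>c\<in>A - {a}. f c * c) \<in> S"
        by (rule ns_sum[OF ns]) (use Afin AS ns_mult[OF ns] in auto)
      moreover have "(f a - 1) * a \<in> S" using ns_mult[OF ns AS[OF a(1)]] .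
      moreover have "f a * a = a + (f a - 1) * a" using a(2) by (cases "f a") auto
      ultimately have "s - a = (f a - 1) * a + (\<Sum>c\<in>A - {a}. f c * c)"
        and "s - a \<in> S" and "a \<le> s" using ns_add[OF ns] by auto
      then show ?thesis unfolding L_def by simp
    qed
    have z: "\<forall>a. a \<notin> A \<inter> L \<longrightarrow> f a = 0" using fA fL by blast
    have "(\<Sum>a\<in>A \<inter> L. f a * a) = (\<Sum>a\<in>A. f a * a)"
      by (rule sum.mono_neutral_left) (use Afin z in auto)
    then show "f \<in> facts (A \<inter> L) s" using z fs unfolding facts_def by simp
  qed
  have fin: "finite (factorizations S s)" using nf unfolding nfact_def by (metis card.infinite not_numeral_le_zero)
  have "card (factorizations S s) \<le> card (facts (A \<inter> L) s)"
    by (rule card_mono) (use cf sub in auto)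
  then show False using nf c1 unfolding nfact_def by simp
qed

end

theorem proposition5p2:
  fixes S :: "nat set" and s :: nat
  assumes "numerical_semigroup S" and "s \<in> S" and "nfact S s \<ge> 2"
  shows "\<exists>d\<in>cycE S. sg_le S d s"
  using main[OF assms] .



end
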